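(* Let $A$ be a dilation, $X$ a ball quasi-Banach function space, $s\in(0,\infty)$, and $d\mu$ a Borel measure on $\mathbb R^n\times\mathbb Z$. Define $$\widetilde{\|d\mu\|}^A_X:=\sup\left\|\left\{\sum_{i\in\mathbb N}\left[\frac{\lambda_i}{\|\mathbf 1_{B^{(i)}}\|_X}\right]^s\mathbf 1_{B^{(i)}}\right\}^{1/s}\right\|_X^{-1}\sum_{j\in\mathbb N}\frac{\lambda_j|B^{(j)}|^{1/2}}{\|\mathbf 1_{B^{(j)}}\|_X}\left[\int_{\widehat{B^{(j)}}}|d\mu(x,k)|\right]^{1/2},$$ the supremum over all $\{B^{(j)}\}_{j\in\mathbb N}\subset\mathcal B$ and $\{\lambda_j\}_{j\in\mathbb N}\subset[0,\infty)$ with $\left\|\left\{\sum_{i\in\mathbb N}\left[\frac{\lambda_i}{\|\mathbf 1_{B^{(i)}}\|_X}\right]^s\mathbf 1_{B^{(i)}}\right\}^{1/s}\right\|_X\in(0,\infty)$. Then $\widetilde{\|d\mu\|}^A_X=\|d\mu\|^A_X$.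
   Context: A real $n\times n$ matrix $A$ is a dilation if all its eigenvalues have modulus $>1$; $b:=|\det A|$. Fix an open ellipsoid $\Delta$ symmetric about $0$ with $|\Delta|=1$ and $r>1$ with $\Delta\subset r\Delta\subset A\Delta$; $B_k:=A^k\Delta$, $\mathcal B:=\{x+B_k:x\in\mathbb R^n,k\in\mathbb Z\}$. Ball quasi-Banach function space: a quasi-normed space $X$ of measurable functions with quasi-norm defined on all measurable functions such that (i) $\|f\|_X=0\Rightarrow f=0$ a.e.; (ii) $|g|\le|f|$ a.e. $\Rightarrow\|g\|_X\le\|f\|_X$; (iii) $0\le f_m\uparrow f$ a.e. $\Rightarrow\|f_m\|_X\uparrow\|f\|_X$; (iv) $\mathbf 1_B\in X$ for $B\in\mathcal B$. For $B\in\mathcal B$, the tent over $B$ is $\widehat B:=\{(y,k)\in\mathbb R^n\times\mathbb Z:y+B_k\subset B\}$. For a Borel measure $d\mu$ on $\mathbb R^n\times\mathbb Z$ and $s\in(0,\infty)$, $$\|d\mu\|^A_X:=\sup\left\|\left\{\sum_{i=1}^m\left[\frac{\lambda_i}{\|\mathbf 1_{B^{(i)}}\|_X}\right]^s\mathbf 1_{B^{(i)}}\right\}^{1/s}\right\|_X^{-1}\sum_{j=1}^m\frac{\lambda_j|B^{(j)}|^{1/2}}{\|\mathbf 1_{B^{(j)}}\|_X}\left[\int_{\widehat{B^{(j)}}}|d\mu(x,k)|\right]^{1/2},$$ the supremum over $m\in\mathbb N$, $\{B^{(j)}\}_{j=1}^m\subset\mathcal B$ and $\{\lambda_j\}_{j=1}^m\subset[0,\infty)$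 with $\sum_j\lambda_j\ne0$; $d\mu$ is an anisotropic $X$–Carleson measure if this is finite. *)

theory Defs
  imports "HOL-Analysis.Analysis"
begin

definition dilation :: "real^'n^'n \<Rightarrow> bool" where
  "dilation A \<longleftrightarrow>
     (\<forall>z::complex. det (\<chi> i j. complex_of_real (A$i$j) - (if i = j then z else 0)) = 0
        \<longrightarrow> 1 < cmod z)"

text \<open>Open ellipsoid centred at 0 (hence symmetric about 0): image of the open unit ball
  under an invertible linear map.\<close>
definition open_ellipsoid0 :: "(real^'n) set \<Rightarrow> bool" where
  "open_ellipsoid0 D \<longleftrightarrow> (\<exists>M::real^'n^'n. invertible M \<and> D = (\<lambda>x. M *v x) ` ball 0 1)"

text \<open>B_k = A^k Delta for k in Z. For k < 0 (A invertible) A^k Delta = {x. A^(-k) x \<in> Delta}.\<close>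
definition Bk :: "real^'n^'n \<Rightarrow> (real^'n) set \<Rightarrow> int \<Rightarrow> (real^'n) set" where
  "Bk A D k = (if 0 \<le> k then ((\<lambda>x. A *v x) ^^ nat k) ` D
               else ((\<lambda>x. A *v x) ^^ nat (-k)) -` D)"

definition dil_balls :: "real^'n^'n \<Rightarrow> (real^'n) set \<Rightarrow> (real^'n) set set" where
  "dil_balls A D = {(\<lambda>y. x + y) ` Bk A D k | x k. True}"

definition tent :: "real^'n^'n \<Rightarrow> (real^'n) set \<Rightarrow> (real^'n) set \<Rightarrow> ((real^'n) \<times> int) set" where
  "tent A D B = {(y, k). (\<lambda>z. y + z) ` Bk A D k \<subseteq> B}"

text \<open>The quasi-norm of X is modelled as a functional N on nonnegative (extended-valued)
  Lebesgue measurable functions (by (ii) the quasi-norm only depends on |f|);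
  X = {f measurable. N |f| < \<infinity>}.\<close>
definition ball_qBfs ::
  "real^'n^'n \<Rightarrow> (real^'n) set \<Rightarrow> ((real^'n \<Rightarrow> ennreal) \<Rightarrow> ennreal) \<Rightarrow> bool" where
  "ball_qBfs A D N \<longleftrightarrow>
     \<comment> \<open>quasi-norm: homogeneity and quasi-triangle inequality\<close>
     (\<forall>f c. f \<in> borel_measurable lebesgue \<and> c \<noteq> \<infinity> \<longrightarrow> N (\<lambda>x. c * f x) = c * N f) \<and>
     (\<exists>K::ennreal. 1 \<le> K \<and> K \<noteq> \<infinity> \<and>
        (\<forall>f g. f \<in> borel_measurable lebesgue \<and> g \<in> borel_measurable lebesgue \<longrightarrow>
               N (\<lambda>x. f x + g x) \<le> K * (N f + N g))) \<and>
     \<comment> \<open>(i)\<close>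
     (\<forall>f. f \<in> borel_measurable lebesgue \<and> N f = 0 \<longrightarrow> (AE x in lebesgue. f x = 0)) \<and>
     \<comment> \<open>(ii)\<close>
     (\<forall>f g. f \<in> borel_measurable lebesgue \<and> g \<in> borel_measurable lebesgue \<and>
            (AE x in lebesgue. g x \<le> f x) \<longrightarrow> N g \<le> N f) \<and>
     \<comment> \<open>(iii)\<close>
     (\<forall>F f. (\<forall>m. F m \<in> borel_measurable lebesgue) \<and> f \<in> borel_measurable lebesgue \<and>
            (AE x in lebesgue. incseq (\<lambda>m. F m x) \<and> f x = (SUP m. F m x))
            \<longrightarrow> N f = (SUP m. N (F m))) \<and>
     \<comment> \<open>(iv)\<close>
     (\<forall>B \<in> dil_balls A D. N (indicator B) < \<infinity>)"

definition epowr :: "ennreal \<Rightarrow> real \<Rightarrow> ennreal" where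
  "epowr x p = (if x = \<infinity> then \<infinity> else ennreal (enn2real x powr p))"

definition esqrt :: "ennreal \<Rightarrow> ennreal" where
  "esqrt x = (if x = \<infinity> then \<infinity> else ennreal (sqrt (enn2real x)))"

text \<open>||1_B||_X as a real number (finite and positive for B in \<B>).\<close>
definition nind :: "((real^'n \<Rightarrow> ennreal) \<Rightarrow> ennreal) \<Rightarrow> (real^'n) set \<Rightarrow> real" where
  "nind N B = enn2real (N (indicator B))"

definition den_fin ::
  "((real^'n \<Rightarrow> ennreal) \<Rightarrow> ennreal) \<Rightarrow> real \<Rightarrow> nat \<Rightarrow> (nat \<Rightarrow> (real^'n) set) \<Rightarrow> (nat \<Rightarrow> real) \<Rightarrow> ennreal" where
  "den_fin N s m Bs lam =
     N (\<lambda>x. epowr (\<Sum>i<m. ennreal ((lam i / nind N (Bs i)) powr s) * indicator (Bs i) x) (1/s))"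

definition den_inf ::
  "((real^'n \<Rightarrow> ennreal) \<Rightarrow> ennreal) \<Rightarrow> real \<Rightarrow> (nat \<Rightarrow> (real^'n) set) \<Rightarrow> (nat \<Rightarrow> real) \<Rightarrow> ennreal" where
  "den_inf N s Bs lam =
     N (\<lambda>x. epowr (\<Sum>i. ennreal ((lam i / nind N (Bs i)) powr s) * indicator (Bs i) x) (1/s))"

definition num_term ::
  "real^'n^'n \<Rightarrow> (real^'n) set \<Rightarrow> ((real^'n \<Rightarrow> ennreal) \<Rightarrow> ennreal) \<Rightarrow> ((real^'n) \<times> int) measure
   \<Rightarrow> (real^'n) set \<Rightarrow> real \<Rightarrow> ennreal" where
  "num_term A D N \<mu> B l =
     ennreal (l * sqrt (measure lborel B) / nind N B) * esqrt (emeasure \<mu> (tent A D B))"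

definition carleson_norm ::
  "real^'n^'n \<Rightarrow> (real^'n) set \<Rightarrow> ((real^'n \<Rightarrow> ennreal) \<Rightarrow> ennreal) \<Rightarrow> real
   \<Rightarrow> ((real^'n) \<times> int) measure \<Rightarrow> ennreal" where
  "carleson_norm A D N s \<mu> =
     (SUP (m, Bs, lam) \<in> {(m, Bs, lam). 1 \<le> m \<and> (\<forall>j<m. Bs j \<in> dil_balls A D \<and> 0 \<le> lam j)
                                  \<and> (\<Sum>j<m. lam j) \<noteq> 0}.
        (\<Sum>j<m. num_term A D N \<mu> (Bs j) (lam j)) / den_fin N s m Bs lam)"

definition carleson_norm_tilde ::
  "real^'n^'n \<Rightarrow> (real^'n) set \<Rightarrow> ((real^'n \<Rightarrow> ennreal) \<Rightarrow> ennreal) \<Rightarrow> real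
   \<Rightarrow> ((real^'n) \<times> int) measure \<Rightarrow> ennreal" where
  "carleson_norm_tilde A D N s \<mu> =
     (SUP (Bs, lam) \<in> {(Bs, lam). (\<forall>j. Bs j \<in> dil_balls A D \<and> 0 \<le> lam j)
                            \<and> 0 < den_inf N s Bs lam \<and> den_inf N s Bs lam < \<infinity>}.
        (\<Sum>j. num_term A D N \<mu> (Bs j) (lam j)) / den_inf N s Bs lam)"

end

theory Submission
  imports Defs
begin

lemma det_nz: assumes "dilation A" shows "det A \<noteq> 0"
proof
  assume h: "det A = 0"
  have "det (\<chi> i j. complex_of_real (A$i$j)) = complex_of_real (det A)"
    unfolding det_def by (simp add: of_real_sum of_real_prod)
  with h have "det (\<chi> i j. complex_of_real (A$i$j) - (if i = j then (0::complex) else 0)) = 0" by simp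
  moreover have "det (\<chi> i j. complex_of_real (A$i$j) - (if i = j then (0::complex) else 0)) = 0 \<longrightarrow> 1 < cmod 0"
    using assms unfolding dilation_def by blast
  ultimately show False by simp
qed

lemma ell_open: fixes D :: "(real^'n) set" assumes "open_ellipsoid0 D" shows "open D" "0 \<in> D"
proof -
  obtain M :: "real^'n^'n" where M: "invertible M" "D = (\<lambda>x. M *v x) ` ball 0 1"
    using assms unfolding open_ellipsoid0_def by blast
  have "surj (\<lambda>x. M *v x)"
    using M(1) by (meson invertible_def matrix_right_invertible_surjective)
  then show "open D" using M(2)
    by (simp add: open_surjective_linear_image)
  show "0 \<in> D" using M(2) by (auto intro!: image_eqI[where x=0])
qed

lemma Bk_props:
  assumes "det A \<noteq> 0" "open D" "0 \<in> D"
  shows "open (Bk A D k) \<and> 0 \<in> Bk A D k"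
proof -
  let ?f = "\<lambda>x. A *v x"
  have lin: "linear ?f" by simp
  have sur: "surj ?f" using assms(1)
    by (meson invertible_det_nz invertible_def matrix_right_invertible_surjective)
  have cf: "continuous_on UNIV ?f"
    using lin linear_conv_bounded_linear linear_continuous_on by blast
  have cont: "continuous_on UNIV (?f ^^ n)" for n
  proof (induction n)
    case (Suc n)
    have "?f ^^ Suc n = ?f \<circ> (?f ^^ n)" by simp
    then show ?case using continuous_on_compose[OF Suc continuous_on_subset[OF cf]] by simp
  qed simp
  have z: "(?f ^^ n) 0 = 0" for n by (induction n) auto
  have oi: "open ((?f ^^ n) ` D)" for n
  proof (induction n)
    case (Suc n)
    have "(?f ^^ Suc n) ` D = ?f ` ((?f ^^ n) ` D)" by (simp add: image_comp)
    then show ?case using Suc open_surjective_linear_image[OF Suc lin sur] by simp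
  qed (simp add: assms)
  have op: "open ((?f ^^ n) -` D)" for n
    using open_vimage[OF assms(2) cont] by simp
  show ?thesis unfolding Bk_def using oi op z assms(3) by (auto simp: image_iff)
qed


lemma ennreal_div_antimono: "(b::ennreal) \<le> c \<Longrightarrow> a / c \<le> a / b"
proof -
  have "b \<le> c \<Longrightarrow> inverse c \<le> inverse b"
  proof (cases "b = 0")
    case False
    assume bc: "b \<le> c"
    show ?thesis
    proof (cases c)
      case (real y)
      then obtain x where x: "b = ennreal x" "0 \<le> x"
        using bc by (cases b) (auto simp: top_unique)
      then have "0 < x" using False by (auto simp: ennreal_eq_0_iff)
      moreover have "x \<le> y" using bc real x by simp
      ultimately show ?thesis using real x
        by (simp add: inverse_ennreal le_imp_inverse_le)
    qed simp
  qed simp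
  then show "b \<le> c \<Longrightarrow> a / c \<le> a / b"
    unfolding divide_ennreal_def by (intro mult_left_mono) auto
qed

lemma epowr_mono: "0 \<le> p \<Longrightarrow> x \<le> y \<Longrightarrow> epowr x p \<le> epowr y p"
  unfolding epowr_def
  by (cases x; cases y) (auto intro!: powr_mono2 simp: top_unique)

lemma epowr_0: "0 < p \<Longrightarrow> epowr 0 p = 0"
  unfolding epowr_def by simp

lemma epowr_nz: "0 < p \<Longrightarrow> x \<noteq> 0 \<Longrightarrow> epowr x p \<noteq> 0"
  unfolding epowr_def by (cases x) auto

lemma epowr_le_fin: "0 \<le> p \<Longrightarrow> 0 \<le> c \<Longrightarrow> x \<le> ennreal c \<Longrightarrow> epowr x p \<le> ennreal (c powr p)"
  unfolding epowr_def by (cases x) (auto intro!: powr_mono2 simp: top_unique)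

lemma epowr_meas[measurable]: "f \<in> borel_measurable M \<Longrightarrow> (\<lambda>x. epowr (f x) p) \<in> borel_measurable M"
proof -
  assume f: "f \<in> borel_measurable M"
  have "{x\<in>space M. f x = \<infinity>} = f -` {\<infinity>} \<inter> space M" by auto
  then have "{x\<in>space M. f x = \<infinity>} \<in> sets M"
    using measurable_sets[OF f, of "{\<infinity>}"] by simp
  then show ?thesis unfolding epowr_def
    apply (intro measurable_If)
    using f by auto
qed


context
  fixes A :: "real^'n^'n" and D :: "(real^'n) set" and N :: "(real^'n \<Rightarrow> ennreal) \<Rightarrow> ennreal"
  assumes detA: "det A \<noteq> 0" and Dop: "open D" and D0: "0 \<in> D" and QB: "ball_qBfs A D N"
begin

lemma ball_open: "B \<in> dil_balls A D \<Longrightarrow> open B \<and> B \<noteq> {}"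
  unfolding dil_balls_def
  using Bk_props[OF detA Dop D0] open_translation by fastforce

lemma ball_sets: "B \<in> dil_balls A D \<Longrightarrow> B \<in> sets lebesgue"
  using ball_open by (simp add: borel_open)

lemma N_nz:
  assumes g: "g \<in> borel_measurable lebesgue" and B: "open B" "x0 \<in> B" and pos: "\<forall>x\<in>B. g x \<noteq> 0"
  shows "N g \<noteq> 0"
proof
  assume "N g = 0"
  then have "AE x in lebesgue. g x = 0" using QB g unfolding ball_qBfs_def by blast
  then have "AE x in lebesgue. x \<in> B \<longrightarrow> x \<in> {}"
    by eventually_elim (use pos in auto)
  then have "x0 \<in> {}" using mem_closed_if_AE_lebesgue_open[OF B(1) closed_empty _ B(2)] by blast
  then show False by simp
qed

lemma nind_pos: "B \<in> dil_balls A D \<Longrightarrow> 0 < nind N B"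
proof -
  assume B: "B \<in> dil_balls A D"
  then obtain x0 where "open B" "x0 \<in> B" using ball_open by blast
  moreover have "indicator B \<in> borel_measurable lebesgue"
    by (rule borel_measurable_indicator) (rule ball_sets[OF B])
  ultimately have "N (indicator B) \<noteq> 0"
    by (intro N_nz) auto
  moreover have "N (indicator B) < \<infinity>" using QB B unfolding ball_qBfs_def by blast
  ultimately show ?thesis unfolding nind_def
    by (simp add: enn2real_positive_iff less_top[symmetric] zero_less_iff_neq_zero)
qed

lemma N_mono: "f \<in> borel_measurable lebesgue \<Longrightarrow> g \<in> borel_measurable lebesgue \<Longrightarrow>
   (\<And>x. g x \<le> f x) \<Longrightarrow> N g \<le> N f"
proof -
  assume a: "f \<in> borel_measurable lebesgue" "g \<in> borel_measurable lebesgue" "\<And>x. g x \<le> f x"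
  then have "AE x in lebesgue. g x \<le> f x" by simp
  then show ?thesis using QB a(1,2) unfolding ball_qBfs_def by blast
qed

lemma N_hom: "f \<in> borel_measurable lebesgue \<Longrightarrow> c \<noteq> \<infinity> \<Longrightarrow> N (\<lambda>x. c * f x) = c * N f"
  using QB unfolding ball_qBfs_def by blast

lemma N_sum_fin:
  fixes m :: nat
  assumes "\<And>i. i < m \<Longrightarrow> g i \<in> borel_measurable lebesgue \<and> N (g i) < \<infinity>"
  shows "N (\<lambda>x. \<Sum>i<m. g i x) < \<infinity>"
  using assms
proof (induction m)
  case 0
  have "N (\<lambda>x. 0 * (\<lambda>x. 0) x) = 0 * N (\<lambda>x. 0)" by (rule N_hom) auto
  then show ?case by simp
next
  case (Suc m)
  obtain K :: ennreal where K: "K \<noteq> \<infinity>" and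
     tri: "\<And>f g. f \<in> borel_measurable lebesgue \<Longrightarrow> g \<in> borel_measurable lebesgue \<Longrightarrow>
               N (\<lambda>x. f x + g x) \<le> K * (N f + N g)"
    using QB unfolding ball_qBfs_def by blast
  have m1: "(\<lambda>x. \<Sum>i<m. g i x) \<in> borel_measurable lebesgue" using Suc.prems by (intro borel_measurable_sum) auto
  have "N (\<lambda>x. \<Sum>i<Suc m. g i x) = N (\<lambda>x. (\<Sum>i<m. g i x) + g m x)" by simp
  also have "\<dots> \<le> K * (N (\<lambda>x. \<Sum>i<m. g i x) + N (g m))"
    using tri[OF m1, of "g m"] Suc.prems by auto
  also have "\<dots> < \<infinity>" using Suc K by (simp add: ennreal_mult_less_top less_top)
  finally show ?case .
qed


lemma den_meas:
  fixes m :: nat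
  assumes "\<And>i. i < m \<Longrightarrow> Bs i \<in> dil_balls A D"
  shows "(\<lambda>x. epowr (\<Sum>i<m. ennreal ((lam i / nind N (Bs i)) powr s) * indicator (Bs i) x) (1/s))
          \<in> borel_measurable lebesgue"
  using assms ball_sets by (intro epowr_meas borel_measurable_sum) auto

lemma den_inf_meas:
  assumes "\<And>i. Bs i \<in> dil_balls A D"
  shows "(\<lambda>x. epowr (\<Sum>i. ennreal ((lam i / nind N (Bs i)) powr s) * indicator (Bs i) x) (1/s))
          \<in> borel_measurable lebesgue"
  using assms ball_sets by (intro epowr_meas borel_measurable_suminf_order) auto

lemma den_fin_le_inf:
  assumes "0 < s" "\<And>i. Bs i \<in> dil_balls A D"
  shows "den_fin N s m Bs lam \<le> den_inf N s Bs lam"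
  unfolding den_fin_def den_inf_def
proof (rule N_mono[OF den_inf_meas den_meas])
  fix x
  show "epowr (\<Sum>i<m. ennreal ((lam i / nind N (Bs i)) powr s) * indicator (Bs i) x) (1/s)
     \<le> epowr (\<Sum>i. ennreal ((lam i / nind N (Bs i)) powr s) * indicator (Bs i) x) (1/s)"
    using assms(1) by (intro epowr_mono sum_le_suminf) (auto intro: summableI)
qed (use assms in auto)

lemma tilde_le:
  assumes s: "0 < s" and BL: "\<forall>j. Bs j \<in> dil_balls A D \<and> 0 \<le> lam j"
  shows "(\<Sum>j. num_term A D N \<mu> (Bs j) (lam j)) / den_inf N s Bs lam \<le> carleson_norm A D N s \<mu>"
proof -
  let ?a = "\<lambda>j. num_term A D N \<mu> (Bs j) (lam j)"
  let ?d = "den_inf N s Bs lam"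
  have "(\<Sum>j. ?a j) / ?d = (SUP m. (\<Sum>j<m. ?a j)) * inverse ?d"
    by (simp add: suminf_eq_SUP divide_ennreal_def)
  also have "\<dots> = (SUP m. (\<Sum>j<m. ?a j) * inverse ?d)"
    by (rule SUP_mult_right_ennreal)
  also have "\<dots> \<le> carleson_norm A D N s \<mu>"
  proof (rule SUP_least)
    fix m
    show "(\<Sum>j<m. ?a j) * inverse ?d \<le> carleson_norm A D N s \<mu>"
    proof (cases "(\<Sum>j<m. lam j) = 0")
      case True
      then have "\<forall>j<m. lam j = 0" using BL by (subst (asm) sum_nonneg_eq_0_iff) auto
      then have "(\<Sum>j<m. ?a j) = 0" by (simp add: num_term_def)
      then show ?thesis by simp
    next
      case False
      then have m1: "1 \<le> m" by (cases m) auto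
      have "(\<Sum>j<m. ?a j) * inverse ?d = (\<Sum>j<m. ?a j) / ?d" by (simp add: divide_ennreal_def)
      also have "\<dots> \<le> (\<Sum>j<m. ?a j) / den_fin N s m Bs lam"
        by (rule ennreal_div_antimono, rule den_fin_le_inf) (use s BL in auto)
      also have "\<dots> \<le> carleson_norm A D N s \<mu>"
        unfolding carleson_norm_def
        by (rule SUP_upper2[where i="(m, Bs, lam)"]) (use m1 False BL in auto)
      finally show ?thesis .
    qed
  qed
  finally show ?thesis .
qed


lemma den_fin_pos:
  assumes s: "0 < s" and BL: "\<forall>j<m. Bs j \<in> dil_balls A D \<and> 0 \<le> lam j" and ne: "(\<Sum>j<m. lam j) \<noteq> 0"
  shows "den_fin N s m Bs lam \<noteq> 0"
proof -
  obtain j where j: "j < m" "lam j \<noteq> 0" using ne by (meson lessThan_iff sum.neutral)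
  then have lj: "0 < lam j" using BL by force
  have Bj: "Bs j \<in> dil_balls A D" using BL j by auto
  then obtain x0 where x0: "open (Bs j)" "x0 \<in> Bs j" using ball_open by blast
  have cpos: "0 < (lam j / nind N (Bs j)) powr s" using lj nind_pos[OF Bj] by simp
  show ?thesis unfolding den_fin_def
  proof (rule N_nz[OF den_meas x0])
    show "\<forall>x\<in>Bs j. epowr (\<Sum>i<m. ennreal ((lam i / nind N (Bs i)) powr s) * indicator (Bs i) x) (1 / s) \<noteq> 0"
    proof
      fix x assume x: "x \<in> Bs j"
      have "ennreal ((lam j / nind N (Bs j)) powr s) * indicator (Bs j) x
          \<le> (\<Sum>i<m. ennreal ((lam i / nind N (Bs i)) powr s) * indicator (Bs i) x)"
        by (rule member_le_sum) (use j in auto)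
      moreover have "0 < ennreal ((lam j / nind N (Bs j)) powr s) * indicator (Bs j) x"
        using x cpos by simp
      ultimately have "(\<Sum>i<m. ennreal ((lam i / nind N (Bs i)) powr s) * indicator (Bs i) x) \<noteq> 0"
        by auto
      then show "epowr (\<Sum>i<m. ennreal ((lam i / nind N (Bs i)) powr s) * indicator (Bs i) x) (1 / s) \<noteq> 0"
        using s by (intro epowr_nz) auto
    qed
  qed (use BL in auto)
qed

lemma den_fin_fin:
  assumes s: "0 < s" and BL: "\<forall>j<m. Bs j \<in> dil_balls A D \<and> 0 \<le> lam j"
  shows "den_fin N s m Bs lam < \<infinity>"
proof -
  define c where "c i = (lam i / nind N (Bs i)) powr s" for i
  define S where "S = (\<Sum>i<m. c i)"
  define C where "C = S powr (1/s)"
  have c0: "0 \<le> c i" for i unfolding c_def by simp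
  have S0: "0 \<le> S" unfolding S_def using c0 by (simp add: sum_nonneg)
  let ?f = "\<lambda>x. epowr (\<Sum>i<m. ennreal (c i) * indicator (Bs i) x) (1/s)"
  let ?g = "\<lambda>i x. ennreal C * indicator (Bs i) x"
  have gm: "?g i \<in> borel_measurable lebesgue" if "i < m" for i
    using ball_sets BL that by auto
  have "N ?f \<le> N (\<lambda>x. \<Sum>i<m. ?g i x)"
  proof (rule N_mono)
    show "?f \<in> borel_measurable lebesgue" unfolding c_def by (rule den_meas) (use BL in auto)
    show "(\<lambda>x. \<Sum>i<m. ?g i x) \<in> borel_measurable lebesgue" using gm by (intro borel_measurable_sum) auto
    fix x
    show "?f x \<le> (\<Sum>i<m. ?g i x)"
    proof (cases "\<exists>i<m. x \<in> Bs i")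
      case True
      then obtain i where i: "i < m" "x \<in> Bs i" by blast
      have "(\<Sum>i<m. ennreal (c i) * indicator (Bs i) x) \<le> (\<Sum>i<m. ennreal (c i))"
        by (intro sum_mono) (auto simp: indicator_def)
      also have "\<dots> = ennreal S" unfolding S_def using c0 by (simp add: sum_ennreal)
      finally have "?f x \<le> ennreal C" unfolding C_def using s S0 by (intro epowr_le_fin) auto
      also have "\<dots> = ?g i x" using i by simp
      also have "\<dots> \<le> (\<Sum>i<m. ?g i x)" by (rule member_le_sum) (use i in auto)
      finally show ?thesis .
    next
      case False
      then have "(\<Sum>i<m. ennreal (c i) * indicator (Bs i) x) = 0" by (auto intro!: sum.neutral)
      then show ?thesis using s epowr_0 by simp
    qed
  qed
  also have "\<dots> < \<infinity>"
  proof (rule N_sum_fin)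
    fix i assume i: "i < m"
    have "N (?g i) = ennreal C * N (indicator (Bs i))"
      using N_hom[of "indicator (Bs i)" "ennreal C"] ball_sets BL i by auto
    also have "\<dots> < \<infinity>" using QB BL i unfolding ball_qBfs_def
      by (simp add: ennreal_mult_less_top)
    finally show "?g i \<in> borel_measurable lebesgue \<and> N (?g i) < \<infinity>" using gm i by auto
  qed
  finally show ?thesis unfolding den_fin_def c_def .
qed


lemma norm_le:
  assumes s: "0 < s" and m1: "1 \<le> m" and BL: "\<forall>j<m. Bs j \<in> dil_balls A D \<and> 0 \<le> lam j"
    and ne: "(\<Sum>j<m. lam j) \<noteq> 0"
  shows "(\<Sum>j<m. num_term A D N \<mu> (Bs j) (lam j)) / den_fin N s m Bs lam \<le> carleson_norm_tilde A D N s \<mu>"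
proof -
  define Bs' where "Bs' j = (if j < m then Bs j else Bs 0)" for j
  define lam' where "lam' j = (if j < m then lam j else 0)" for j
  have BL': "\<forall>j. Bs' j \<in> dil_balls A D \<and> 0 \<le> lam' j"
    using BL m1 unfolding Bs'_def lam'_def by auto
  have "(\<Sum>i. ennreal ((lam' i / nind N (Bs' i)) powr s) * indicator (Bs' i) x)
      = (\<Sum>i<m. ennreal ((lam i / nind N (Bs i)) powr s) * indicator (Bs i) x)" for x
    by (subst suminf_finite[of "{..<m}"]) (auto simp: Bs'_def lam'_def)
  then have den: "den_inf N s Bs' lam' = den_fin N s m Bs lam"
    unfolding den_inf_def den_fin_def by simp
  have num: "(\<Sum>j. num_term A D N \<mu> (Bs' j) (lam' j)) = (\<Sum>j<m. num_term A D N \<mu> (Bs j) (lam j))"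
    by (subst suminf_finite[of "{..<m}"]) (auto simp: Bs'_def lam'_def num_term_def)
  have pos: "0 < den_inf N s Bs' lam'" using den den_fin_pos[OF s BL ne] by (simp add: zero_less_iff_neq_zero)
  have fin: "den_inf N s Bs' lam' < \<infinity>" using den den_fin_fin[OF s BL] by simp
  show ?thesis
    unfolding carleson_norm_tilde_def
    by (rule SUP_upper2[where i="(Bs', lam')"]) (use BL' pos fin num den in auto)
qed

end


theorem proposition6p2:
  fixes A :: "real^'n^'n" and D :: "(real^'n) set" and r :: real and s :: real
    and N :: "(real^'n \<Rightarrow> ennreal) \<Rightarrow> ennreal" and \<mu> :: "((real^'n) \<times> int) measure"
  assumes "dilation A"
    and "open_ellipsoid0 D" and "emeasure lborel D = 1"
    and "1 < r" and "D \<subseteq> (\<lambda>x. r *\<^sub>R x) ` D" and "(\<lambda>x. r *\<^sub>R x) ` D \<subseteq> (\<lambda>x. A *v x) ` D"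
    and "ball_qBfs A D N"
    and "0 < s"
    and "sets \<mu> = sets (borel \<Otimes>\<^sub>M count_space UNIV)"
  shows "carleson_norm_tilde A D N s \<mu> = carleson_norm A D N s \<mu>"
proof -
  note dn = det_nz[OF assms(1)]
  note eo = ell_open[OF assms(2)]
  show ?thesis
  proof (rule antisym)
    show "carleson_norm_tilde A D N s \<mu> \<le> carleson_norm A D N s \<mu>"
      unfolding carleson_norm_tilde_def
      by (rule SUP_least) (auto intro!: tilde_le[OF dn eo assms(7) assms(8)])
    show "carleson_norm A D N s \<mu> \<le> carleson_norm_tilde A D N s \<mu>"
      unfolding carleson_norm_def
      by (rule SUP_least) (auto intro!: norm_le[OF dn eo assms(7) assms(8)])
  qed
qed

end
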